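(* Let $\Omega\subset\mathbb{R}^d$ be a bounded domain and $\mathcal{S}=\{(a_1,a_2,a_3)\in\mathbb{R}^3: a_i\ge0,\ a_1a_2a_3=0\}$. For $\mathbf v=(v_1,v_2,v_3)\in L^2(\Omega)^3$ define $\mathcal{P}\mathbf v$ pointwise by: at $x\in\Omega$, let $k^*(x)$ be the index $k\in\{1,2,3\}$ minimizing $(v_k(x))^+=\max\{v_k(x),0\}$, ties broken by choosing the smallest index, and set $(\mathcal P\mathbf v)_i(x)=(v_i(x))^+$ if $i\ne k^*(x)$ and $(\mathcal P\mathbf v)_{k^*(x)}(x)=0$. Then $\mathcal P\mathbf v\in L^2(\Omega)^3$, $\mathcal P\mathbf v(x)\in\mathcal S$ for a.e. $x\in\Omega$, and $$\|\mathbf v-\mathcal P\mathbf v\|_{L^2(\Omega)^3}^2=\min\big\{\|\mathbf v-\mathbf w\|_{L^2(\Omega)^3}^2:\ \mathbf w\in L^2(\Omega)^3,\ \mathbf w(x)\in\mathcal S\text{ a.e.}\big\}.$$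
   Context: $\|\mathbf v\|_{L^2(\Omega)^3}^2=\int_\Omega\sum_{i=1}^3|v_i(x)|^2\,dx$. *)

theory Defs
  imports "HOL-Analysis.Analysis"
begin

text \<open>Vector-valued functions v = (v_1,v_2,v_3) are represented as v :: nat => 'a => real,
  with components v 1, v 2, v 3 (other indices are irrelevant).\<close>

definition L2 :: "'a::euclidean_space set \<Rightarrow> ('a \<Rightarrow> real) \<Rightarrow> bool" where
  "L2 \<Omega> f \<longleftrightarrow> f \<in> borel_measurable (lebesgue_on \<Omega>) \<and>
                  integrable (lebesgue_on \<Omega>) (\<lambda>x. (f x)\<^sup>2)"

definition L2vec :: "'a::euclidean_space set \<Rightarrow> (nat \<Rightarrow> 'a \<Rightarrow> real) \<Rightarrow> bool" where
  "L2vec \<Omega> v \<longleftrightarrow> (\<forall>i\<in>{1,2,3}. L2 \<Omega> (v i))"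

definition L2norm_sq :: "'a::euclidean_space set \<Rightarrow> (nat \<Rightarrow> 'a \<Rightarrow> real) \<Rightarrow> real" where
  "L2norm_sq \<Omega> v = (\<Sum>i\<in>{1,2,3}. integral\<^sup>L (lebesgue_on \<Omega>) (\<lambda>x. (v i x)\<^sup>2))"

definition Sset :: "(nat \<Rightarrow> real) set" where
  "Sset = {a. (\<forall>i\<in>{1,2,3}. a i \<ge> 0) \<and> a 1 * a 2 * a 3 = 0}"

definition kstar :: "(nat \<Rightarrow> 'a \<Rightarrow> real) \<Rightarrow> 'a \<Rightarrow> nat" where
  "kstar v x = (LEAST k. k \<in> {1,2,3} \<and> (\<forall>j\<in>{1,2,3}. max (v k x) 0 \<le> max (v j x) 0))"

definition Pproj :: "(nat \<Rightarrow> 'a \<Rightarrow> real) \<Rightarrow> nat \<Rightarrow> 'a \<Rightarrow> real" where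
  "Pproj v i x = (if i = kstar v x then 0 else max (v i x) 0)"

end

theory Submission
  imports Defs
begin

lemma kstar_explicit:
  "kstar v x = (if max (v 1 x) 0 \<le> max (v 2 x) 0 \<and> max (v 1 x) 0 \<le> max (v 3 x) 0 then 1
     else if max (v 2 x) 0 \<le> max (v 3 x) 0 then 2 else 3)"
  unfolding kstar_def
  apply (rule Least_equality)
   apply auto
  done

lemma Pproj1: "Pproj v 1 x = (if max (v 1 x) 0 \<le> max (v 2 x) 0 \<and> max (v 1 x) 0 \<le> max (v 3 x) 0 then 0 else max (v 1 x) 0)"
  unfolding Pproj_def kstar_explicit by auto
lemma Pproj2: "Pproj v 2 x = (if max (v 1 x) 0 \<le> max (v 2 x) 0 \<and> max (v 1 x) 0 \<le> max (v 3 x) 0 then max (v 2 x) 0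
     else if max (v 2 x) 0 \<le> max (v 3 x) 0 then 0 else max (v 2 x) 0)"
  unfolding Pproj_def kstar_explicit by auto
lemma Pproj3: "Pproj v 3 x = (if max (v 1 x) 0 \<le> max (v 2 x) 0 \<and> max (v 1 x) 0 \<le> max (v 3 x) 0 then max (v 3 x) 0
     else if max (v 2 x) 0 \<le> max (v 3 x) 0 then max (v 3 x) 0 else 0)"
  unfolding Pproj_def kstar_explicit by auto

lemma Pproj_S: "(\<lambda>i. Pproj v i x) \<in> Sset"
  unfolding Sset_def using Pproj1[of v x] Pproj2[of v x] Pproj3[of v x] by auto

lemma Pproj_bound: "i \<in> {1,2,3} \<Longrightarrow> (Pproj v i x)\<^sup>2 \<le> (v i x)\<^sup>2"
  unfolding Pproj_def by (auto simp: max_def power2_eq_square mult_mono)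

lemma kstar_mem: "kstar v x \<in> {1,2,3}"
  unfolding kstar_explicit by auto

lemma kstar_min: "max (v (kstar v x) x) 0 \<le> max (v j x) 0 \<or> j \<notin> {1,2,3}"
  unfolding kstar_explicit by auto

lemma pointwise:
  assumes "a \<in> Sset"
  shows "(\<Sum>i\<in>{1,2,3}. (v i x - Pproj v i x)\<^sup>2) \<le> (\<Sum>i\<in>{1,2,3}. (v i x - a i)\<^sup>2)"
proof -
  define k where "k = kstar v x"
  define p where "p i = max (v i x) 0" for i
  define n where "n i = v i x - p i" for i
  have a: "a 1 \<ge> 0" "a 2 \<ge> 0" "a 3 \<ge> 0" "a 1 = 0 \<or> a 2 = 0 \<or> a 3 = 0"
    using assms unfolding Sset_def by auto
  have h: "\<And>t s::real. s \<ge> 0 \<Longrightarrow> (t - max t 0)\<^sup>2 \<le> (t - s)\<^sup>2"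
  proof -
    fix t s :: real assume "s \<ge> 0"
    show "(t - max t 0)\<^sup>2 \<le> (t - s)\<^sup>2"
    proof (cases "t \<ge> 0")
      case True then show ?thesis by simp
    next
      case False
      then have "0 \<le> -t" "-t \<le> s - t" using \<open>s \<ge> 0\<close> by auto
      then have "(-t)\<^sup>2 \<le> (s-t)\<^sup>2" using power_mono by blast
      then show ?thesis using False by (simp add: max_def power2_commute)
    qed
  qed
  have ge: "(v i x - a i)\<^sup>2 \<ge> (n i)\<^sup>2" if "i \<in> {1,2,3}" for i
    using h[of "a i" "v i x"] a that unfolding n_def p_def by auto
  have zero: "(v i x - a i)\<^sup>2 = (n i)\<^sup>2 + (p i)\<^sup>2" if "a i = 0" for i
    using that unfolding n_def p_def by (auto simp: max_def power2_eq_square)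
  have lhs: "(v i x - Pproj v i x)\<^sup>2 = (n i)\<^sup>2 + (if i = k then (p i)\<^sup>2 else 0)" for i
    unfolding Pproj_def n_def p_def k_def by (auto simp: max_def power2_eq_square)
  have km: "k \<in> {1,2,3}" unfolding k_def by (rule kstar_mem)
  have pk: "(p k)\<^sup>2 \<le> (p j)\<^sup>2" if "j \<in> {1,2,3}" for j
    using kstar_min[of v x j] that unfolding p_def k_def
    by (intro power_mono) auto
  have L: "(\<Sum>i\<in>{1,2,3}. (v i x - Pproj v i x)\<^sup>2) = (n 1)\<^sup>2 + (n 2)\<^sup>2 + (n 3)\<^sup>2 + (p k)\<^sup>2"
    using km by (auto simp: lhs)
  have R: "(\<Sum>i\<in>{1,2,3}. (v i x - a i)\<^sup>2) = (v 1 x - a 1)\<^sup>2 + (v 2 x - a 2)\<^sup>2 + (v 3 x - a 3)\<^sup>2"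
    by simp
  show ?thesis unfolding L R
    using a(4) ge[of 1] ge[of 2] ge[of 3] zero[of 1] zero[of 2] zero[of 3] pk[of 1] pk[of 2] pk[of 3]
    by auto
qed

lemma sq_diff_le: "((a::real) - b)\<^sup>2 \<le> 2 * a\<^sup>2 + 2 * b\<^sup>2"
proof -
  have "0 \<le> (a + b)\<^sup>2" by simp
  then show ?thesis by (simp add: power2_eq_square algebra_simps)
qed

lemma L2_diff:
  assumes "L2 \<Omega> f" "L2 \<Omega> g"
  shows "integrable (lebesgue_on \<Omega>) (\<lambda>x. (f x - g x)\<^sup>2)"
proof (rule Bochner_Integration.integrable_bound)
  show "integrable (lebesgue_on \<Omega>) (\<lambda>x. 2 * (f x)\<^sup>2 + 2 * (g x)\<^sup>2)"
    using assms unfolding L2_def by auto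
  have [measurable]: "f \<in> borel_measurable (lebesgue_on \<Omega>)" "g \<in> borel_measurable (lebesgue_on \<Omega>)"
    using assms unfolding L2_def by auto
  show "(\<lambda>x. (f x - g x)\<^sup>2) \<in> borel_measurable (lebesgue_on \<Omega>)" by measurable
  show "AE x in lebesgue_on \<Omega>. norm ((f x - g x)\<^sup>2) \<le> norm (2 * (f x)\<^sup>2 + 2 * (g x)\<^sup>2)"
    using sq_diff_le by auto
qed

lemma Pproj_meas:
  assumes "\<And>i. i \<in> {1,2,3} \<Longrightarrow> v i \<in> borel_measurable M" and "i \<in> {1,2,3}"
  shows "Pproj v i \<in> borel_measurable M"
proof -
  have [measurable]: "v 1 \<in> borel_measurable M" "v 2 \<in> borel_measurable M" "v 3 \<in> borel_measurable M"
    using assms(1) by auto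
  have e1: "Pproj v 1 = (\<lambda>x. (if max (v 1 x) 0 \<le> max (v 2 x) 0 \<and> max (v 1 x) 0 \<le> max (v 3 x) 0 then 0 else max (v 1 x) 0))"
    by (rule ext, rule Pproj1)
  have e2: "Pproj v 2 = (\<lambda>x. (if max (v 1 x) 0 \<le> max (v 2 x) 0 \<and> max (v 1 x) 0 \<le> max (v 3 x) 0 then max (v 2 x) 0
     else if max (v 2 x) 0 \<le> max (v 3 x) 0 then 0 else max (v 2 x) 0))"
    by (rule ext, rule Pproj2)
  have e3: "Pproj v 3 = (\<lambda>x. (if max (v 1 x) 0 \<le> max (v 2 x) 0 \<and> max (v 1 x) 0 \<le> max (v 3 x) 0 then max (v 3 x) 0
     else if max (v 2 x) 0 \<le> max (v 3 x) 0 then max (v 3 x) 0 else 0))"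
    by (rule ext, rule Pproj3)
  have "Pproj v 1 \<in> borel_measurable M" unfolding e1 by measurable
  moreover have "Pproj v 2 \<in> borel_measurable M" unfolding e2 by measurable
  moreover have "Pproj v 3 \<in> borel_measurable M" unfolding e3 by measurable
  ultimately show ?thesis using assms(2) by auto
qed

theorem lemma3p13:
  fixes \<Omega> :: "'a::euclidean_space set" and v :: "nat \<Rightarrow> 'a \<Rightarrow> real"
  assumes "open \<Omega>" and "connected \<Omega>" and "bounded \<Omega>" and "\<Omega> \<noteq> {}"
    and "L2vec \<Omega> v"
  shows "L2vec \<Omega> (Pproj v)
    \<and> (AE x in lebesgue_on \<Omega>. (\<lambda>i. Pproj v i x) \<in> Sset)
    \<and> (\<forall>w. L2vec \<Omega> w \<and> (AE x in lebesgue_on \<Omega>. (\<lambda>i. w i x) \<in> Sset) \<longrightarrow>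
          L2norm_sq \<Omega> (\<lambda>i x. v i x - Pproj v i x) \<le> L2norm_sq \<Omega> (\<lambda>i x. v i x - w i x))"
proof -
  let ?M = "lebesgue_on \<Omega>"
  have vL: "L2 \<Omega> (v i)" if "i \<in> {1,2,3}" for i
    using assms(5) that unfolding L2vec_def by auto
  have PL: "L2 \<Omega> (Pproj v i)" if i: "i \<in> {1,2,3}" for i
  proof -
    have m: "Pproj v i \<in> borel_measurable ?M"
      using Pproj_meas[of v ?M i] vL i unfolding L2_def by auto
    have "integrable ?M (\<lambda>x. (Pproj v i x)\<^sup>2)"
    proof (rule Bochner_Integration.integrable_bound)
      show "integrable ?M (\<lambda>x. (v i x)\<^sup>2)" using vL[OF i] unfolding L2_def by auto
      show "(\<lambda>x. (Pproj v i x)\<^sup>2) \<in> borel_measurable ?M" using m by measurable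
      show "AE x in ?M. norm ((Pproj v i x)\<^sup>2) \<le> norm ((v i x)\<^sup>2)"
        by (intro AE_I2) (simp add: Pproj_bound[OF i])
    qed
    then show ?thesis using m unfolding L2_def by auto
  qed
  have part1: "L2vec \<Omega> (Pproj v)" unfolding L2vec_def using PL by auto
  have part2: "AE x in ?M. (\<lambda>i. Pproj v i x) \<in> Sset" by (intro AE_I2) (rule Pproj_S)
  have part3: "L2norm_sq \<Omega> (\<lambda>i x. v i x - Pproj v i x) \<le> L2norm_sq \<Omega> (\<lambda>i x. v i x - w i x)"
    if w: "L2vec \<Omega> w" "AE x in ?M. (\<lambda>i. w i x) \<in> Sset" for w
  proof -
    have wL: "L2 \<Omega> (w i)" if "i \<in> {1,2,3}" for i
      using w(1) that unfolding L2vec_def by auto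
    have i1: "integrable ?M (\<lambda>x. (v i x - Pproj v i x)\<^sup>2)" if "i \<in> {1,2,3}" for i
      using L2_diff[OF vL PL] that by auto
    have i2: "integrable ?M (\<lambda>x. (v i x - w i x)\<^sup>2)" if "i \<in> {1,2,3}" for i
      using L2_diff[OF vL wL] that by auto
    have "L2norm_sq \<Omega> (\<lambda>i x. v i x - Pproj v i x) = integral\<^sup>L ?M (\<lambda>x. \<Sum>i\<in>{1,2,3}. (v i x - Pproj v i x)\<^sup>2)"
      unfolding L2norm_sq_def by (subst Bochner_Integration.integral_sum) (use i1 in auto)
    also have "\<dots> \<le> integral\<^sup>L ?M (\<lambda>x. \<Sum>i\<in>{1,2,3}. (v i x - w i x)\<^sup>2)"
    proof (rule integral_mono_AE)
      show "integrable ?M (\<lambda>x. \<Sum>i\<in>{1,2,3}. (v i x - Pproj v i x)\<^sup>2)"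
        using i1 by (intro Bochner_Integration.integrable_sum) auto
      show "integrable ?M (\<lambda>x. \<Sum>i\<in>{1,2,3}. (v i x - w i x)\<^sup>2)"
        using i2 by (intro Bochner_Integration.integrable_sum) auto
      show "AE x in ?M. (\<Sum>i\<in>{1,2,3}. (v i x - Pproj v i x)\<^sup>2) \<le> (\<Sum>i\<in>{1,2,3}. (v i x - w i x)\<^sup>2)"
        using w(2) by eventually_elim (rule pointwise)
    qed
    also have "\<dots> = L2norm_sq \<Omega> (\<lambda>i x. v i x - w i x)"
      unfolding L2norm_sq_def by (subst Bochner_Integration.integral_sum) (use i2 in auto)
    finally show ?thesis .
  qed
  show ?thesis using part1 part2 part3 by blast
qed

end
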